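(* Let $[\mathbf{K}_0]=\{[\mathbf{K}_0(\mathbf{x})],\mathbf{x}\in D\}$ be any random field in $\mathcal{C}^+_n$ and let $[\mathbf{K}]$ be defined for all $\mathbf{x}\in D$ by $$[\mathbf{K}(\mathbf{x})]=\frac{1}{1+\varepsilon}[\underline L(\mathbf{x})]^T\{\varepsilon[I_n]+[\mathbf{K}_0(\mathbf{x})]\}[\underline L(\mathbf{x})].$$ Then: (i) for all $\mathbf{x}\in D$, $\|\mathbf{K}(\mathbf{x})\|_F\le \frac{\underline k_1}{1+\varepsilon}(\sqrt{n}\,\varepsilon+\|\mathbf{K}_0(\mathbf{x})\|_F)$ almost surely; (ii) for all $\mathbf{z}\in\mathbb{R}^n$ and all $\mathbf{x}\in D$, $\underline k_\varepsilon\|\mathbf{z}\|_2^2\le\langle[\mathbf{K}(\mathbf{x})]\mathbf{z},\mathbf{z}\rangle_2$ almost surely, where $\underline k_\varepsilon=\underline k_0\,\varepsilon/(1+\varepsilon)$ is a positive constant independent of $\mathbf{x}$; (iii) for all $\mathbf{x}\in D$, $\|[\mathbf{K}(\mathbf{x})]^{-1}\|_F\le\frac{\sqrt{n}(1+\varepsilon)}{\varepsilon}\,\mathrm{tr}([\underline K(\mathbf{x})]^{-1})$ almost surely; consequently, for every integer $p\ge1$ and all $\mathbf{x}\in D$, $E\{\|[\mathbf{K}(\mathbf{x})]^{-1}\|_F^p\}<+\infty$ (in particular $\{[\mathbf{K}(\mathbf{x})]^{-1},\mathbf{x}\in D\}$ is a second-order random field).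
   Context: Let $d\ge1$, $n\ge1$ be integers and $D\subset\mathbb{R}^d$ a bounded open domain. $\mathbb{M}_n^+(\mathbb{R})$ denotes the set of symmetric positive-definite real $n\times n$ matrices, $\|\cdot\|_F$ the Frobenius norm, $\|\cdot\|_2$ and $\langle\cdot,\cdot\rangle_2$ the Euclidean norm and inner product, $[I_n]$ the identity matrix. $\mathcal{C}^+_n$ is the set of all random fields $\{[\mathbf{K}(\mathbf{x})],\mathbf{x}\in D\}$ defined on a probability space $(\Theta,\mathcal{T},\mathcal{P})$ with values in $\mathbb{M}_n^+(\mathbb{R})$. Let $\mathbf{x}\mapsto[\underline K(\mathbf{x})]$ be a function from $D$ into $\mathbb{M}_n^+(\mathbb{R})$ such that for all $\mathbf{x}\in D$ and $\mathbf{z}\in\mathbb{R}^n$, $\underline k_0\|\mathbf{z}\|_2^2\le\langle[\underline K(\mathbf{x})]\mathbf{z},\mathbf{z}\rangle_2\le n^{-1/2}\widetilde{\underline k}_1\|\mathbf{z}\|_2^2$, with constants $0<\underline k_0<\widetilde{\underline k}_1<+\infty$ independent of $\mathbf{x}$; set $\underline k_1=n\,\widetilde{\underline k}_1$. $[\underline L(\mathbf{x})]$ is the upper triangular real matrix with $[\underline K(\mathbf{x})]=[\underline L(\mathbf{x})]^T[\underline L(\mathbf{x})]$. $\varepsilon>0$ is a fixed real number. *)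

theory Defs
  imports "HOL-Analysis.Analysis" "HOL-Probability.Probability"
begin

definition frob_norm :: "real^'n^'n \<Rightarrow> real" where
  "frob_norm A = sqrt (\<Sum>i\<in>UNIV. \<Sum>j\<in>UNIV. (A $ i $ j)\<^sup>2)"

definition spd :: "real^'n^'n \<Rightarrow> bool" where
  "spd A \<longleftrightarrow> transpose A = A \<and> (\<forall>z. z \<noteq> 0 \<longrightarrow> (A *v z) \<bullet> z > 0)"

definition upper_triangular :: "real^('n::{finite,linorder})^('n::{finite,linorder}) \<Rightarrow> bool" where
  "upper_triangular A \<longleftrightarrow> (\<forall>i j. j < i \<longrightarrow> A $ i $ j = 0)"

definition Kfield :: "real \<Rightarrow> ('x \<Rightarrow> real^'n^'n) \<Rightarrow> ('w \<Rightarrow> 'x \<Rightarrow> real^'n^'n)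
    \<Rightarrow> 'w \<Rightarrow> 'x \<Rightarrow> real^'n^'n" where
  "Kfield eps L K0 \<omega> x =
     (1 / (1 + eps)) *\<^sub>R (transpose (L x) ** (eps *\<^sub>R mat 1 + K0 \<omega> x) ** L x)"

end

theory Submission imports Defs begin

lemma norm_mat_sum: "norm (A::real^'n^'m) = sqrt (\<Sum>i\<in>UNIV. \<Sum>j\<in>UNIV. (A$i$j)\<^sup>2)"
proof -
  have "norm A = sqrt (\<Sum>i\<in>UNIV. (norm (A$i))\<^sup>2)" by (simp add: norm_vec_def L2_set_def)
  also have "\<dots> = sqrt (\<Sum>i\<in>UNIV. \<Sum>j\<in>UNIV. (A$i$j)\<^sup>2)"
    by (simp add: norm_vec_def L2_set_def sum_nonneg)
  finally show ?thesis .
qed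

lemma frob_norm_eq: "frob_norm (A::real^'n^'n) = norm A"
  by (simp add: frob_norm_def norm_mat_sum)

lemma transpose_nth: "transpose (A::real^'n^'m) $ i $ j = A $ j $ i"
  by (simp add: transpose_def)

lemma norm_transpose_mat: "norm (transpose (A::real^'n^'m)) = norm A"
proof -
  have "norm (transpose A) = sqrt (\<Sum>i\<in>UNIV. \<Sum>j\<in>UNIV. (A$j$i)\<^sup>2)"
    by (simp only: norm_mat_sum transpose_nth)
  also have "\<dots> = sqrt (\<Sum>j\<in>UNIV. \<Sum>i\<in>UNIV. (A$j$i)\<^sup>2)" by (rule arg_cong[where f=sqrt], rule sum.swap)
  also have "\<dots> = norm A" by (simp only: norm_mat_sum)
  finally show ?thesis .
qed

lemma norm_mat_vec_le: "norm ((P::real^'n^'m) *v v) \<le> norm P * norm v"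
proof -
  have "norm (P *v v) = L2_set (\<lambda>i. \<bar>P$i \<bullet> v\<bar>) UNIV"
    by (simp add: norm_vec_def matrix_vector_mul_component)
  also have "\<dots> \<le> L2_set (\<lambda>i. norm v * norm (P$i)) UNIV"
    by (rule L2_set_mono) (simp_all add: Cauchy_Schwarz_ineq2[of "P$_" v, simplified mult.commute])
  also have "\<dots> = norm v * norm P" by (simp add: L2_set_right_distrib norm_vec_def)
  finally show ?thesis by (simp add: mult.commute)
qed

lemma transpose_dot: "(transpose (L::real^'n^'m) *v w) \<bullet> v = w \<bullet> (L *v v)"
proof -
  have "transpose L *v w = w v* L" using vector_transpose_matrix[of w "transpose L"] by (simp add: transpose_transpose)
  then show ?thesis by (simp add: dot_lmul_matrix)
qed

lemma row_mult: "((B::real^'k^'m) ** L) $ i = transpose L *v (B $ i)"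
  by (simp add: vec_eq_iff matrix_matrix_mult_def matrix_vector_mult_def transpose_def mult.commute)

lemma norm_mult_right:
  fixes B :: "real^'k^'m" and L :: "real^'n^'k"
  assumes "\<And>v. norm (transpose L *v v) \<le> s * norm v" "0 \<le> s"
  shows "norm (B ** L) \<le> s * norm B"
proof -
  have "norm (B ** L) = L2_set (\<lambda>i. norm (transpose L *v B$i)) UNIV"
    by (simp add: norm_vec_def row_mult)
  also have "\<dots> \<le> L2_set (\<lambda>i. s * norm (B$i)) UNIV"
    by (rule L2_set_mono) (use assms(1) in auto)
  also have "\<dots> = s * norm B" by (simp add: L2_set_right_distrib norm_vec_def assms)
  finally show ?thesis .
qed

lemma norm_mult_left:
  fixes B :: "real^'n^'k" and P :: "real^'k^'m"
  assumes "\<And>v. norm (P *v v) \<le> s * norm v" "0 \<le> s"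
  shows "norm (P ** B) \<le> s * norm B"
proof -
  have "P ** B = transpose (transpose B ** transpose P)"
    by (simp add: matrix_transpose_mul transpose_transpose)
  then have "norm (P ** B) = norm (transpose B ** transpose P)" by (simp add: norm_transpose_mat)
  also have "\<dots> \<le> s * norm (transpose B)"
    by (rule norm_mult_right) (auto simp: transpose_transpose assms)
  finally show ?thesis by (simp add: norm_transpose_mat)
qed

lemma norm_mult_le: "norm ((P::real^'k^'m) ** (B::real^'n^'k)) \<le> norm P * norm B"
  by (rule norm_mult_left) (auto simp: norm_mat_vec_le)

lemma transpose_bound:
  fixes L :: "real^'n^'m"
  assumes "\<And>v. norm (L *v v) \<le> s * norm v" "0 \<le> s"
  shows "norm (transpose L *v w) \<le> s * norm w"
proof -
  let ?u = "transpose L *v w"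
  have "(norm ?u)\<^sup>2 = ?u \<bullet> ?u" by (simp add: power2_norm_eq_inner)
  also have "\<dots> = w \<bullet> (L *v ?u)"
    by (rule transpose_dot)
  also have "\<dots> \<le> norm w * norm (L *v ?u)" by (rule norm_cauchy_schwarz)
  also have "\<dots> \<le> norm w * (s * norm ?u)" by (simp add: assms mult_left_mono)
  finally have *: "(norm ?u)\<^sup>2 \<le> s * norm w * norm ?u" by (simp add: algebra_simps)
  show ?thesis
  proof (cases "norm ?u = 0")
    case True then show ?thesis using assms by simp
  next
    case False
    then have "norm ?u > 0" by simp
    with * show ?thesis by (simp add: power2_eq_square mult.commute)
  qed
qed

lemma matrix_inv_eq:
  fixes A B :: "real^'n^'n"
  assumes "A ** B = mat 1"
  shows "matrix_inv A = B"
proof -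
  have BA: "B ** A = mat 1" using assms matrix_left_right_inverse by blast
  have ex: "\<exists>X. A ** X = mat 1 \<and> X ** A = mat 1" using assms BA by blast
  then have X: "A ** matrix_inv A = mat 1 \<and> matrix_inv A ** A = mat 1"
    unfolding matrix_inv_def by (rule someI_ex)
  have "matrix_inv A = matrix_inv A ** (A ** B)" by (simp add: assms)
  also have "\<dots> = B" by (simp add: matrix_mul_assoc X)
  finally show ?thesis .
qed

lemma invertible_of_ker:
  fixes A :: "real^'n^'n"
  assumes "\<And>v. A *v v = 0 \<Longrightarrow> v = 0"
  shows "A ** matrix_inv A = mat 1" "matrix_inv A ** A = mat 1"
proof -
  obtain B where B: "B ** A = mat 1" using matrix_left_invertible_ker assms by blast
  then have "A ** B = mat 1" using matrix_left_right_inverse by blast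
  then have "matrix_inv A = B" by (rule matrix_inv_eq)
  then show "A ** matrix_inv A = mat 1" "matrix_inv A ** A = mat 1"
    using B matrix_left_right_inverse by auto
qed

lemma matrix_inv_cramer:
  fixes A :: "real^'n^'n"
  assumes "A ** matrix_inv A = mat 1"
  shows "matrix_inv A = (\<chi> k j. det (\<chi> i l. if l = k then axis j 1 $ i else A$i$l) / det A)"
proof -
  have d: "det A \<noteq> 0"
  proof -
    have "invertible A" unfolding invertible_def using assms matrix_left_right_inverse1 by blast
    then show ?thesis by (simp add: invertible_det_nz)
  qed
  show ?thesis
    unfolding vec_eq_iff
  proof (intro allI)
    fix k j
    let ?b = "axis j 1 :: real^'n"
    have eq: "A *v (matrix_inv A *v ?b) = ?b"
      by (simp add: matrix_vector_mul_assoc assms)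
    have c: "matrix_inv A *v ?b = (\<chi> k. det(\<chi> i l. if l=k then ?b$i else A$i$l) / det A)"
      using iffD1[OF cramer[OF d] eq] .
    have "matrix_inv A $ k $ j = (matrix_inv A *v ?b) $ k"
      by (simp add: matrix_vector_mult_basis column_def)
    also have "\<dots> = det(\<chi> i l. if l=k then ?b$i else A$i$l) / det A"
      by (subst c) (rule vec_lambda_beta)
    finally show "matrix_inv A $ k $ j = (\<chi> k j. det (\<chi> i l. if l = k then axis j 1 $ i else A$i$l) / det A) $ k $ j"
      by simp
  qed
qed


lemma quad_form:
  fixes L A :: "real^'n^'n"
  shows "((transpose L ** A ** L) *v z) \<bullet> z = (A *v (L *v z)) \<bullet> (L *v z)"
proof -
  have "(transpose L ** A ** L) *v z = transpose L *v (A *v (L *v z))"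
    by (simp add: matrix_vector_mul_assoc matrix_mul_assoc)
  then show ?thesis by (simp only: transpose_dot)
qed

lemma norm_mat1: "norm (mat 1 :: real^'n^'n) = sqrt (real CARD('n))"
proof -
  have "\<And>i. (\<Sum>j\<in>UNIV. ((mat 1 :: real^'n^'n) $ i $ j)\<^sup>2) = 1"
    by (simp add: mat_def if_distrib[of "\<lambda>x. x\<^sup>2"] cong: if_cong)
  then show ?thesis by (simp add: norm_mat_sum)
qed

lemma det_meas:
  fixes F :: "'w \<Rightarrow> real^'n^'n"
  assumes "\<And>i j. (\<lambda>\<omega>. F \<omega> $ i $ j) \<in> borel_measurable M"
  shows "(\<lambda>\<omega>. det (F \<omega>)) \<in> borel_measurable M"
  unfolding det_def
  by (intro borel_measurable_sum borel_measurable_times borel_measurable_prod borel_measurable_const assms)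

lemma entry_meas:
  fixes F :: "'w \<Rightarrow> real^'n^'m"
  assumes "F \<in> borel_measurable M"
  shows "(\<lambda>\<omega>. F \<omega> $ i $ j) \<in> borel_measurable M"
proof -
  have "(\<lambda>A::real^'n^'m. A $ i $ j) \<in> borel_measurable borel"
    by (intro borel_measurable_continuous_onI linear_continuous_on
        bounded_linear_compose[OF bounded_linear_vec_nth bounded_linear_vec_nth])
  from measurable_compose[OF assms this] show ?thesis .
qed


lemma per_point:
  fixes L Kb A0 :: "real^('n::finite)^'n" and k0 k1t eps :: real
  defines "nn \<equiv> real CARD('n)"
  defines "K \<equiv> (1 / (1 + eps)) *\<^sub>R (transpose L ** (eps *\<^sub>R mat 1 + A0) ** L)"
  assumes chol: "Kb = transpose L ** L"
    and bnd: "\<And>z. k0 * (norm z)\<^sup>2 \<le> (Kb *v z) \<bullet> z \<and> (Kb *v z) \<bullet> z \<le> k1t / sqrt nn * (norm z)\<^sup>2"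
    and k0: "0 < k0" "k0 < k1t" and eps: "0 < eps"
    and A0: "spd A0"
  shows "norm K \<le> nn * k1t / (1 + eps) * (sqrt nn * eps + norm A0)"
    and "\<And>z. k0 * eps / (1 + eps) * (norm z)\<^sup>2 \<le> (K *v z) \<bullet> z"
    and "norm (matrix_inv K) \<le> sqrt nn * (1 + eps) / eps * trace (matrix_inv Kb)"
proof -
  define A where "A = eps *\<^sub>R mat 1 + A0"
  define c where "c = k1t / sqrt nn"
  define s where "s = sqrt c"
  have nn1: "1 \<le> nn" unfolding nn_def by (simp add: Suc_le_eq)
  have sq1: "1 \<le> sqrt nn" using nn1 by simp
  have k1t: "0 < k1t" using k0 by linarith
  have c0: "0 \<le> c" unfolding c_def using k1t nn1 by simp
  have s0: "0 \<le> s" unfolding s_def using c0 by simp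
  have ss: "s * s = c" unfolding s_def using c0 by simp
  have nL: "(norm (L *v v))\<^sup>2 = (Kb *v v) \<bullet> v" for v
    by (simp add: chol power2_norm_eq_inner matrix_vector_mul_assoc[symmetric] transpose_dot dot_lmul_matrix)
  have Lb: "norm (L *v v) \<le> s * norm v" for v
  proof -
    have "(norm (L *v v))\<^sup>2 \<le> c * (norm v)\<^sup>2" using bnd[of v] nL[of v] unfolding c_def by simp
    then have "sqrt ((norm (L *v v))\<^sup>2) \<le> sqrt (c * (norm v)\<^sup>2)" by (rule real_sqrt_le_mono)
    then show ?thesis unfolding s_def by (simp add: real_sqrt_mult)
  qed
  have LTb: "norm (transpose L *v v) \<le> s * norm v" for v
    by (rule transpose_bound[OF Lb s0])
  have Apos: "eps * (norm w)\<^sup>2 \<le> (A *v w) \<bullet> w" for w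
  proof -
    have "(A0 *v w) \<bullet> w \<ge> 0"
      using A0 unfolding spd_def by (cases "w = 0") (auto intro: less_imp_le)
    moreover have "(A *v w) \<bullet> w = eps * (norm w)\<^sup>2 + (A0 *v w) \<bullet> w"
      unfolding A_def
      by (simp add: matrix_vector_mult_add_rdistrib scaleR_matrix_vector_assoc[symmetric]
          inner_add_left power2_norm_eq_inner)
    ultimately show ?thesis by simp
  qed
  have KA: "K = (1 / (1 + eps)) *\<^sub>R (transpose L ** A ** L)" unfolding K_def A_def ..
  have "norm K = 1 / (1 + eps) * norm (transpose L ** (A ** L))"
    using eps by (simp add: KA matrix_mul_assoc)
  also have "\<dots> \<le> 1 / (1 + eps) * (s * norm (A ** L))"
    using eps by (intro mult_left_mono norm_mult_left[OF LTb s0]) auto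
  also have "\<dots> \<le> 1 / (1 + eps) * (s * (s * norm A))"
    using eps s0 by (intro mult_left_mono norm_mult_right[OF LTb s0]) auto
  also have "\<dots> = c / (1 + eps) * norm A" using ss by (simp add: field_simps)
  also have "\<dots> \<le> c / (1 + eps) * (sqrt nn * eps + norm A0)"
  proof -
    have "norm A \<le> norm (eps *\<^sub>R (mat 1 :: real^'n^'n)) + norm A0" unfolding A_def by (rule norm_triangle_ineq)
    also have "\<dots> = sqrt nn * eps + norm A0" using eps by (simp add: norm_mat1 nn_def)
    finally show ?thesis using c0 eps by (intro mult_left_mono) auto
  qed
  also have "\<dots> \<le> nn * k1t / (1 + eps) * (sqrt nn * eps + norm A0)"
  proof -
    have "c \<le> k1t" unfolding c_def using k1t sq1 by (simp add: divide_le_eq mult_le_cancel_left1 less_imp_le)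
    also have "k1t \<le> nn * k1t" using nn1 k1t by simp
    finally have "c / (1 + eps) \<le> nn * k1t / (1 + eps)" using eps by (simp add: divide_right_mono)
    then show ?thesis using eps nn1 by (intro mult_right_mono add_nonneg_nonneg mult_nonneg_nonneg) auto
  qed
  finally show "norm K \<le> nn * k1t / (1 + eps) * (sqrt nn * eps + norm A0)" .
  show "k0 * eps / (1 + eps) * (norm z)\<^sup>2 \<le> (K *v z) \<bullet> z" for z
  proof -
    have "(K *v z) \<bullet> z = 1 / (1 + eps) * ((A *v (L *v z)) \<bullet> (L *v z))"
      by (simp add: KA scaleR_matrix_vector_assoc[symmetric] quad_form)
    also have "\<dots> \<ge> 1 / (1 + eps) * (eps * (norm (L *v z))\<^sup>2)"
      using eps Apos by (intro mult_left_mono) auto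
    finally have 1: "1 / (1 + eps) * (eps * (norm (L *v z))\<^sup>2) \<le> (K *v z) \<bullet> z" .
    have "k0 * (norm z)\<^sup>2 \<le> (norm (L *v z))\<^sup>2" using bnd[of z] nL[of z] by simp
    then have "eps / (1 + eps) * (k0 * (norm z)\<^sup>2) \<le> eps / (1 + eps) * (norm (L *v z))\<^sup>2"
      using eps by (intro mult_left_mono) auto
    with 1 show ?thesis by (simp add: field_simps)
  qed
  have kerL: "L *v v = 0 \<Longrightarrow> v = 0" for v
  proof -
    assume "L *v v = 0"
    then have "k0 * (norm v)\<^sup>2 \<le> 0" using bnd[of v] nL[of v] by simp
    then show "v = 0" using k0 by (simp add: mult_le_0_iff)
  qed
  have kerA: "A *v v = 0 \<Longrightarrow> v = 0" for v
  proof -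
    assume "A *v v = 0"
    then have "eps * (norm v)\<^sup>2 \<le> 0" using Apos[of v] by simp
    then show "v = 0" using eps by (simp add: mult_le_0_iff)
  qed
  define Li where "Li = matrix_inv L"
  define Ai where "Ai = matrix_inv A"
  have L1: "L ** Li = mat 1" "Li ** L = mat 1" using invertible_of_ker[OF kerL] unfolding Li_def by auto
  have A1: "A ** Ai = mat 1" "Ai ** A = mat 1" using invertible_of_ker[OF kerA] unfolding Ai_def by auto
  have LT1: "transpose L ** transpose Li = mat 1"
    using arg_cong[OF L1(2), of transpose] by (simp add: matrix_transpose_mul)
  define X where "X = (1 + eps) *\<^sub>R (Li ** Ai ** transpose Li)"
  have "K ** X = ((1 / (1 + eps)) * (1 + eps)) *\<^sub>R (transpose L ** A ** L ** (Li ** Ai ** transpose Li))"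
    unfolding KA X_def by (simp add: matrix_scalar_ac scalar_matrix_assoc[symmetric])
  also have "\<dots> = transpose L ** A ** (L ** Li) ** Ai ** transpose Li"
    using eps by (simp add: matrix_mul_assoc)
  also have "\<dots> = transpose L ** (A ** Ai) ** transpose Li"
    by (simp add: L1 matrix_mul_assoc)
  also have "\<dots> = mat 1" by (simp add: A1 LT1)
  finally have invK: "matrix_inv K = X" by (rule matrix_inv_eq)
  have "Kb ** (Li ** transpose Li) = transpose L ** (L ** Li) ** transpose Li"
    by (simp add: chol matrix_mul_assoc)
  also have "\<dots> = mat 1" by (simp add: L1 LT1)
  finally have invKb: "matrix_inv Kb = Li ** transpose Li" by (rule matrix_inv_eq)
  have tr: "trace (matrix_inv Kb) = (norm Li)\<^sup>2"
    by (simp add: invKb trace_def matrix_matrix_mult_def transpose_def norm_mat_sum sum_nonneg power2_eq_square)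
  have Aib: "norm (Ai *v v) \<le> (1 / eps) * norm v" for v
  proof -
    let ?w = "Ai *v v"
    have Aw: "A *v ?w = v" by (simp add: matrix_vector_mul_assoc A1)
    have "eps * (norm ?w)\<^sup>2 \<le> norm v * norm ?w"
      using Apos[of ?w] norm_cauchy_schwarz[of v ?w] by (simp add: Aw)
    then have "eps * norm ?w \<le> norm v"
      by (cases "norm ?w = 0") (auto simp: power2_eq_square)
    then show ?thesis using eps by (simp add: field_simps)
  qed
  have "norm (matrix_inv K) = (1 + eps) * norm (Li ** (Ai ** transpose Li))"
    using eps by (simp add: invK X_def matrix_mul_assoc)
  also have "\<dots> \<le> (1 + eps) * (norm Li * norm (Ai ** transpose Li))"
    using eps by (intro mult_left_mono norm_mult_le) auto
  also have "\<dots> \<le> (1 + eps) * (norm Li * ((1 / eps) * norm (transpose Li)))"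
    using eps by (intro mult_left_mono norm_mult_left[OF Aib]) auto
  also have "\<dots> = (1 + eps) / eps * trace (matrix_inv Kb)"
    by (simp add: tr norm_transpose_mat power2_eq_square)
  also have "\<dots> \<le> sqrt nn * (1 + eps) / eps * trace (matrix_inv Kb)"
  proof -
    have "0 \<le> (1 + eps) / eps * trace (matrix_inv Kb)" using eps tr by simp
    then have "1 * ((1 + eps) / eps * trace (matrix_inv Kb)) \<le> sqrt nn * ((1 + eps) / eps * trace (matrix_inv Kb))"
      using sq1 by (intro mult_right_mono) auto
    then show ?thesis by simp
  qed
  finally show "norm (matrix_inv K) \<le> sqrt nn * (1 + eps) / eps * trace (matrix_inv Kb)" .
qed

theorem lemma1:
  fixes M :: "'w measure"
    and D :: "'d::euclidean_space set"
    and Kb L :: "'d \<Rightarrow> real^('n::{finite,linorder})^('n::{finite,linorder})"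
    and K0 :: "'w \<Rightarrow> 'd \<Rightarrow> real^('n::{finite,linorder})^('n::{finite,linorder})"
    and k0 k1t eps :: real
  assumes "prob_space M"
    and "open D" and "bounded D"
    and Kb_spd: "\<And>x. x \<in> D \<Longrightarrow> spd (Kb x)"
    and Kb_bounds: "\<And>x z. x \<in> D \<Longrightarrow>
           k0 * (norm z)\<^sup>2 \<le> (Kb x *v z) \<bullet> z \<and>
           (Kb x *v z) \<bullet> z \<le> k1t / sqrt (real CARD('n::{finite,linorder})) * (norm z)\<^sup>2"
    and "0 < k0" and "k0 < k1t"
    and L_tri: "\<And>x. x \<in> D \<Longrightarrow> upper_triangular (L x)"
    and L_diag: "\<And>x i. x \<in> D \<Longrightarrow> L x $ i $ i > 0"
    and L_chol: "\<And>x. x \<in> D \<Longrightarrow> Kb x = transpose (L x) ** L x"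
    and K0_rv: "\<And>x. x \<in> D \<Longrightarrow> (\<lambda>\<omega>. K0 \<omega> x) \<in> borel_measurable M"
    and K0_spd: "\<And>x \<omega>. x \<in> D \<Longrightarrow> \<omega> \<in> space M \<Longrightarrow> spd (K0 \<omega> x)"
    and "0 < eps"
  shows "(\<forall>x\<in>D. AE \<omega> in M. frob_norm (Kfield eps L K0 \<omega> x)
              \<le> (real CARD('n::{finite,linorder}) * k1t) / (1 + eps)
                  * (sqrt (real CARD('n::{finite,linorder})) * eps + frob_norm (K0 \<omega> x)))
       \<and> 0 < k0 * eps / (1 + eps)
       \<and> (\<forall>z. \<forall>x\<in>D. AE \<omega> in M.
              k0 * eps / (1 + eps) * (norm z)\<^sup>2 \<le> (Kfield eps L K0 \<omega> x *v z) \<bullet> z)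
       \<and> (\<forall>x\<in>D. AE \<omega> in M. frob_norm (matrix_inv (Kfield eps L K0 \<omega> x))
              \<le> sqrt (real CARD('n::{finite,linorder})) * (1 + eps) / eps * trace (matrix_inv (Kb x)))
       \<and> (\<forall>p::nat. p \<ge> 1 \<longrightarrow> (\<forall>x\<in>D.
              integrable M (\<lambda>\<omega>. frob_norm (matrix_inv (Kfield eps L K0 \<omega> x)) ^ p)))"
proof -
  let ?n = "real CARD('n)"
  have P: "prob_space M" by fact
  have pp: "norm (Kfield eps L K0 \<omega> x) \<le> ?n * k1t / (1 + eps) * (sqrt ?n * eps + norm (K0 \<omega> x))"
      "\<And>z. k0 * eps / (1 + eps) * (norm z)\<^sup>2 \<le> (Kfield eps L K0 \<omega> x *v z) \<bullet> z"
      "norm (matrix_inv (Kfield eps L K0 \<omega> x)) \<le> sqrt ?n * (1 + eps) / eps * trace (matrix_inv (Kb x))"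
    if x: "x \<in> D" and w: "\<omega> \<in> space M" for x \<omega>
    unfolding Kfield_def
    by (rule per_point[OF L_chol[OF x] Kb_bounds[OF x] \<open>0 < k0\<close> \<open>k0 < k1t\<close> \<open>0 < eps\<close> K0_spd[OF x w]])+
  have i: "\<forall>x\<in>D. AE \<omega> in M. frob_norm (Kfield eps L K0 \<omega> x)
              \<le> (?n * k1t) / (1 + eps) * (sqrt ?n * eps + frob_norm (K0 \<omega> x))"
    using pp(1) by (auto simp: frob_norm_eq)
  have ii: "\<forall>z. \<forall>x\<in>D. AE \<omega> in M.
              k0 * eps / (1 + eps) * (norm z)\<^sup>2 \<le> (Kfield eps L K0 \<omega> x *v z) \<bullet> z"
    using pp(2) by auto
  have iii: "\<forall>x\<in>D. AE \<omega> in M. frob_norm (matrix_inv (Kfield eps L K0 \<omega> x))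
              \<le> sqrt ?n * (1 + eps) / eps * trace (matrix_inv (Kb x))"
    using pp(3) by (auto simp: frob_norm_eq)
  have pos: "0 < k0 * eps / (1 + eps)" using \<open>0 < k0\<close> \<open>0 < eps\<close> by simp
  have iv: "integrable M (\<lambda>\<omega>. frob_norm (matrix_inv (Kfield eps L K0 \<omega> x)) ^ p)"
    if x: "x \<in> D" for x p
  proof -
    let ?K = "\<lambda>\<omega>. Kfield eps L K0 \<omega> x"
    let ?C = "sqrt ?n * (1 + eps) / eps * trace (matrix_inv (Kb x))"
    have K0e[measurable]: "(\<lambda>\<omega>. K0 \<omega> x $ a $ b) \<in> borel_measurable M" for a b
      using entry_meas[OF K0_rv[OF x]] .
    have Ke: "(\<lambda>\<omega>. ?K \<omega> $ a $ b) \<in> borel_measurable M" for a b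
      unfolding Kfield_def
      apply (simp add: matrix_matrix_mult_def)
      by measurable
    define E where "E k j \<omega> = det (\<chi> i l. if l = k then axis j 1 $ i else ?K \<omega> $ i $ l) / det (?K \<omega>)" for k j \<omega>
    have Ee: "E k j \<in> borel_measurable M" for k j
    proof -
      have "(\<lambda>\<omega>. det (\<chi> i l. if l = k then axis j 1 $ i else ?K \<omega> $ i $ l)) \<in> borel_measurable M"
        proof (rule det_meas)
        fix a b show "(\<lambda>\<omega>. (\<chi> i l. if l = k then axis j 1 $ i else ?K \<omega> $ i $ l) $ a $ b) \<in> borel_measurable M"
          by (cases "b = k") (simp_all add: Ke)
      qed
      moreover have "(\<lambda>\<omega>. det (?K \<omega>)) \<in> borel_measurable M"
        by (rule det_meas) (rule Ke)
      ultimately show ?thesis unfolding E_def[abs_def] by (rule borel_measurable_divide)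
    qed
    have eqw: "frob_norm (matrix_inv (?K \<omega>)) ^ p = sqrt (\<Sum>k\<in>UNIV. \<Sum>j\<in>UNIV. (E k j \<omega>)\<^sup>2) ^ p"
      if w: "\<omega> \<in> space M" for \<omega>
    proof -
      have "?K \<omega> ** matrix_inv (?K \<omega>) = mat 1"
      proof -
        have "(?K \<omega>) *v v = 0 \<Longrightarrow> v = 0" for v
        proof -
          assume "?K \<omega> *v v = 0"
          then have "k0 * eps / (1 + eps) * (norm v)\<^sup>2 \<le> 0" using pp(2)[OF x w, of v] by simp
          then have "(norm v)\<^sup>2 \<le> 0" using pos by (metis mult_zero_right mult_le_cancel_left_pos)
          then show "v = 0" by simp
        qed
        then show ?thesis by (rule invertible_of_ker)
      qed
      then have ci: "matrix_inv (?K \<omega>) = (\<chi> k j. det (\<chi> i l. if l = k then axis j 1 $ i else ?K \<omega> $ i $ l) / det (?K \<omega>))"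
        by (rule matrix_inv_cramer)
      show ?thesis unfolding frob_norm_def ci by (simp add: E_def)
    qed
    have meas: "(\<lambda>\<omega>. frob_norm (matrix_inv (?K \<omega>)) ^ p) \<in> borel_measurable M"
    proof (subst measurable_cong[OF eqw])
      show "(\<lambda>\<omega>. sqrt (\<Sum>k\<in>UNIV. \<Sum>j\<in>UNIV. (E k j \<omega>)\<^sup>2) ^ p) \<in> borel_measurable M"
        by (intro borel_measurable_power measurable_compose[OF _ borel_measurable_sqrt]
            borel_measurable_sum Ee)
    qed auto
    have bnd: "AE \<omega> in M. norm (frob_norm (matrix_inv (?K \<omega>)) ^ p) \<le> ?C ^ p"
    proof (rule AE_I2)
      fix \<omega> assume w: "\<omega> \<in> space M"
      have "0 \<le> frob_norm (matrix_inv (?K \<omega>))" by (simp add: frob_norm_eq)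
      moreover have "frob_norm (matrix_inv (?K \<omega>)) \<le> ?C" using pp(3)[OF x w] by (simp add: frob_norm_eq)
      ultimately show "norm (frob_norm (matrix_inv (?K \<omega>)) ^ p) \<le> ?C ^ p"
        by (simp add: power_mono)
    qed
    show ?thesis
      by (rule finite_measure.integrable_const_bound[OF prob_space.finite_measure[OF P] bnd meas])
  qed
  show ?thesis using i ii iii pos iv by blast
qed

end
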